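(* Let $\xi_1,\dots,\xi_n$ be independent real random variables with $\mathbf{E}\xi_i=0$, satisfying Bernstein's condition: there is a constant $\varepsilon>0$ such that $|\mathbf{E}\xi_i^k|\le \frac12 k!\,\varepsilon^{k-2}\mathbf{E}\xi_i^2$ for all $k\ge 3$ and $i=1,\dots,n$. Let $\sigma^2=\sum_{i=1}^n\mathbf{E}\xi_i^2$ and $T_n(\lambda)=\sum_{i=1}^n\frac{\mathbf{E}\xi_ie^{\lambda\xi_i}}{\mathbf{E}e^{\lambda\xi_i}}$. Then for all $0\le\lambda<\varepsilon^{-1}$, \[ (1-2.4\lambda\varepsilon)\lambda\sigma^2\le \frac{(1-1.5\lambda\varepsilon)(1-\lambda\varepsilon)}{1-\lambda\varepsilon+6\lambda^2\varepsilon^2}\lambda\sigma^2\le T_n(\lambda)\le\frac{1-0.5\lambda\varepsilon}{(1-\lambda\varepsilon)^2}\lambda\sigma^2 . \] *)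

theory Defs
  imports "HOL-Probability.Probability"
begin

definition T_n :: "'a measure \<Rightarrow> (nat \<Rightarrow> 'a \<Rightarrow> real) \<Rightarrow> nat \<Rightarrow> real \<Rightarrow> real" where
  "T_n M \<xi> n l = (\<Sum>i=1..n. (\<integral>x. \<xi> i x * exp (l * \<xi> i x) \<partial>M) / (\<integral>x. exp (l * \<xi> i x) \<partial>M))"

end

theory Submission
  imports Defs
begin

lemma exp_term_pm: "(l * a)^k /\<^sub>R fact k + (- (l * a))^k /\<^sub>R fact k = (l^k + (-l)^k) / fact k * (a::real) ^ k"
proof -
  have "- (l * a) = (-l) * a" by simp
  then show ?thesis by (simp only: power_mult_distrib) (simp add: divide_inverse algebra_simps)
qed

lemma pow_pm_nonneg: "0 \<le> ((l::real)^k + (-l)^k) * x^k"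
proof (cases "even k")
  case True then show ?thesis by (simp add: zero_le_even_power)
next
  case False then show ?thesis by simp
qed

lemma exp_abs_integrable:
  fixes M :: "'a measure" and X :: "'a \<Rightarrow> real"
  assumes P: "prob_space M"
    and integ: "\<And>k. integrable M (\<lambda>x. X x ^ k)"
    and eps: "\<epsilon> > 0"
    and bern: "\<And>k. k \<ge> 3 \<Longrightarrow>
        \<bar>\<integral>x. X x ^ k \<partial>M\<bar> \<le> 1/2 * fact k * \<epsilon> ^ (k - 2) * (\<integral>x. X x ^ 2 \<partial>M)"
    and l: "0 \<le> l" "l * \<epsilon> < 1"
  shows "integrable M (\<lambda>x. exp (l * \<bar>X x\<bar>))"
proof -
  interpret prob_space M by (rule P)
  have Xm[measurable]: "X \<in> borel_measurable M"
    using integ[of 1] by (simp add: borel_measurable_integrable)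
  define c where "c k = (\<integral>x. X x ^ k \<partial>M)" for k
  define t where "t k = (l^k + (-l)^k) / fact k" for k
  define f where "f N x = (\<Sum>k<N. t k * X x ^ k)" for N x
  define u where "u x = exp (l * X x) + exp (- (l * X x))" for x
  have fint: "integrable M (f N)" for N
    unfolding f_def using integ by auto
  have fI: "integral\<^sup>L M (f N) = (\<Sum>k<N. t k * c k)" for N
    unfolding f_def c_def using integ by (simp add: integral_sum)
  have mono: "mono (\<lambda>n. f n x)" for x
  proof (rule incseq_SucI)
    fix n
    have "0 \<le> t n * X x ^ n" unfolding t_def using pow_pm_nonneg[of l n "X x"]
      by (simp add: divide_nonneg_pos)
    then show "f n x \<le> f (Suc n) x" unfolding f_def by simp
  qed
  have lim: "(\<lambda>n. f n x) \<longlonglongrightarrow> u x" for x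
  proof -
    have "(\<lambda>k. (l * X x)^k /\<^sub>R fact k + (- (l * X x))^k /\<^sub>R fact k) sums (exp (l * X x) + exp (- (l * X x)))"
      by (intro sums_add exp_converges)
    moreover have "(\<lambda>k. (l * X x)^k /\<^sub>R fact k + (- (l * X x))^k /\<^sub>R fact k) = (\<lambda>k. t k * X x ^ k)"
      by (rule ext, unfold t_def, rule exp_term_pm)
    ultimately have "(\<lambda>k. t k * X x ^ k) sums u x" unfolding u_def by (simp only:)
    then show ?thesis unfolding f_def sums_def .
  qed
  define y where "y = l * \<epsilon>"
  have y: "0 \<le> y" "y < 1" using l eps by (auto simp: y_def)
  have c2: "0 \<le> c 2" unfolding c_def by (simp add: integral_nonneg_AE)
  have summ: "summable (\<lambda>k. t k * c k)"
  proof (rule summable_comparison_test')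
    show "summable (\<lambda>k. c 2 / \<epsilon>^2 * y ^ k)"
      using y by (intro summable_mult summable_geometric) auto
    fix k :: nat assume k: "3 \<le> k"
    have "norm (t k * c k) \<le> 2 * l^k / fact k * \<bar>c k\<bar>"
      unfolding t_def by (auto simp: abs_mult intro!: mult_right_mono divide_right_mono
        order.trans[OF abs_triangle_ineq] simp: power_abs abs_minus_cancel l)
    also have "\<dots> \<le> 2 * l^k / fact k * (1/2 * fact k * \<epsilon> ^ (k - 2) * c 2)"
      using bern[OF k] l by (intro mult_left_mono) (auto simp: c_def)
    also have "\<dots> = l^k * \<epsilon>^(k-2) * c 2" by simp
    also have "\<dots> = c 2 / \<epsilon>^2 * y ^ k"
    proof -
      have "\<epsilon>^k = \<epsilon>^(k-2) * \<epsilon>^2" proof -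
        have "k = (k-2)+2" using k by simp
        then show ?thesis by (metis power_add)
      qed
      then show ?thesis using eps by (simp add: y_def power_mult_distrib field_simps)
    qed
    finally show "norm (t k * c k) \<le> c 2 / \<epsilon>^2 * y ^ k" .
  qed
  have uint: "integrable M u"
    apply (rule integrable_monotone_convergence[where f=f and x="\<Sum>k. t k * c k"])
    using fint mono lim summable_LIMSEQ[OF summ] by (auto simp: fI) (simp add: u_def[abs_def])
  have le: "exp (l * \<bar>X x\<bar>) \<le> u x" for x
  proof (cases "X x \<ge> 0")
    case True
    then show ?thesis by (simp add: u_def add_increasing2)
  next
    case False
    then have "l * \<bar>X x\<bar> = - (l * X x)" by simp
    then show ?thesis by (simp add: u_def add_increasing)
  qed
  have "(\<lambda>x. exp (l * \<bar>X x\<bar>)) \<in> borel_measurable M" by measurable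
  moreover have "AE x in M. norm (exp (l * \<bar>X x\<bar>)) \<le> norm (u x)"
    using le order_trans[OF le] by (auto intro!: AE_I2 simp: abs_of_nonneg)
  ultimately show ?thesis by (rule Bochner_Integration.integrable_bound[OF uint])
qed

lemma exp_partial_le: "0 \<le> (a::real) \<Longrightarrow> (\<Sum>k<N. a^k / fact k) \<le> exp a"
proof -
  assume a: "0 \<le> a"
  have s: "(\<lambda>k. a^k / fact k) sums exp a" using exp_converges[of a] by (simp add: divide_inverse mult.commute)
  have "(\<Sum>k<N. a^k / fact k) \<le> (\<Sum>k. a^k / fact k)"
    by (rule sum_le_suminf) (use s a in \<open>auto simp: sums_summable\<close>)
  then show ?thesis using s sums_unique by metis
qed

lemma moment_series:
  fixes M :: "'a measure" and X :: "'a \<Rightarrow> real"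
  assumes P: "prob_space M"
    and integ: "\<And>k. integrable M (\<lambda>x. X x ^ k)"
    and w: "integrable M w"
    and bound: "\<And>x. \<bar>X x\<bar>^j * exp (l * \<bar>X x\<bar>) \<le> w x"
    and l: "0 \<le> l"
  shows "(\<lambda>k. (\<integral>x. X x ^ (k + j) \<partial>M) * l^k / fact k) sums (\<integral>x. X x ^ j * exp (l * X x) \<partial>M)"
proof -
  interpret prob_space M by (rule P)
  have Xm[measurable]: "X \<in> borel_measurable M"
    using integ[of 1] by (simp add: borel_measurable_integrable)
  define s where "s N x = (\<Sum>k<N. X x ^ (k + j) * l^k / fact k)" for N x
  have sI: "integral\<^sup>L M (s N) = (\<Sum>k<N. (\<integral>x. X x ^ (k + j) \<partial>M) * l^k / fact k)" for N
    unfolding s_def using integ by (simp add: integral_sum)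
  have lim: "(\<lambda>N. s N x) \<longlonglongrightarrow> X x ^ j * exp (l * X x)" for x
  proof -
    have "(\<lambda>k. X x ^ j * ((l * X x)^k /\<^sub>R fact k)) sums (X x ^ j * exp (l * X x))"
      by (intro sums_mult exp_converges)
    moreover have "(\<lambda>k. X x ^ j * ((l * X x)^k /\<^sub>R fact k)) = (\<lambda>k. X x ^ (k + j) * l^k / fact k)"
      by (rule ext) (simp add: power_mult_distrib power_add divide_inverse algebra_simps)
    ultimately have "(\<lambda>k. X x ^ (k + j) * l^k / fact k) sums (X x ^ j * exp (l * X x))" by (simp only:)
    then show ?thesis unfolding s_def sums_def .
  qed
  have bnd: "norm (s N x) \<le> w x" for N x
  proof -
    have "norm (s N x) \<le> (\<Sum>k<N. \<bar>X x ^ (k + j) * l^k / fact k\<bar>)"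
      unfolding s_def real_norm_def by (rule sum_abs)
    also have "\<dots> = \<bar>X x\<bar>^j * (\<Sum>k<N. (l * \<bar>X x\<bar>)^k / fact k)"
      by (simp add: sum_distrib_left abs_mult power_abs power_add power_mult_distrib l algebra_simps)
    also have "\<dots> \<le> \<bar>X x\<bar>^j * exp (l * \<bar>X x\<bar>)"
      by (intro mult_left_mono exp_partial_le) (auto simp: l)
    also have "\<dots> \<le> w x" by (rule bound)
    finally show ?thesis .
  qed
  have "(\<lambda>N. integral\<^sup>L M (s N)) \<longlonglongrightarrow> (\<integral>x. X x ^ j * exp (l * X x) \<partial>M)"
  proof (rule integral_dominated_convergence[where w=w])
    show "(\<lambda>x. X x ^ j * exp (l * X x)) \<in> borel_measurable M" by measurable
    show "s N \<in> borel_measurable M" for N unfolding s_def[abs_def] by measurable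
    show "integrable M w" by (rule w)
    show "AE x in M. (\<lambda>N. s N x) \<longlonglongrightarrow> X x ^ j * exp (l * X x)" using lim by simp
    show "AE x in M. norm (s N x) \<le> w x" for N using bnd by simp
  qed
  then show ?thesis unfolding sums_def sI .
qed

lemma exp_quad_upper: "(t::real) \<le> 0 \<Longrightarrow> exp t \<le> 1 + t + t^2/2"
proof -
  assume t: "t \<le> 0"
  obtain s where "exp t = (\<Sum>m<3. t ^ m / fact m) + exp s / fact 3 * t ^ 3"
    using Maclaurin_exp_le[of t 3] by blast
  moreover have "exp s / fact 3 * t ^ 3 \<le> 0"
    using t by (intro mult_nonneg_nonpos) (auto simp: power_odd_eq)
  ultimately show ?thesis by (simp add: numeral_3_eq_3 power2_eq_square)
qed

lemma g_lower: "(t::real) * (exp t - 1) \<ge> t^2 + t^3/2"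
proof (cases "t \<ge> 0")
  case True
  then have "exp t - 1 \<ge> t + t^2/2" using exp_lower_Taylor_quadratic[of t] by simp
  then have "t * (exp t - 1) \<ge> t * (t + t^2/2)" using True by (intro mult_left_mono) auto
  then show ?thesis by (simp add: power2_eq_square power3_eq_cube algebra_simps)
next
  case False
  then have "exp t - 1 \<le> t + t^2/2" using exp_quad_upper[of t] by simp
  then have "t * (exp t - 1) \<ge> t * (t + t^2/2)" using False by (intro mult_left_mono_neg) auto
  then show ?thesis by (simp add: power2_eq_square power3_eq_cube algebra_simps)
qed

lemma g_nonneg: "(t::real) * (exp t - 1) \<ge> 0"
proof (cases "t \<ge> 0")
  case True then show ?thesis by simp
next
  case False then show ?thesis by (intro mult_nonpos_nonpos) auto
qed

lemma pw_lower: "0 \<le> (l::real) \<Longrightarrow> x * exp (l * x) \<ge> x + l * x^2 + l^2 * x^3 / 2"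
proof (cases "l = 0")
  case False
  assume l: "0 \<le> l"
  then have lp: "l > 0" using False by simp
  have "(l*x) * (exp (l*x) - 1) \<ge> (l*x)^2 + (l*x)^3/2" by (rule g_lower)
  then have "l * (x * exp (l*x)) \<ge> l * (x + l * x^2 + l^2 * x^3 / 2)"
    by (simp add: power_mult_distrib power2_eq_square power3_eq_cube algebra_simps)
  then show ?thesis using lp by simp
qed simp

lemma pw_nonneg: "0 \<le> (l::real) \<Longrightarrow> x * exp (l * x) \<ge> x"
proof (cases "l = 0")
  case False
  assume l: "0 \<le> l"
  then have lp: "l > 0" using False by simp
  have "(l*x) * (exp (l*x) - 1) \<ge> 0" by (rule g_nonneg)
  then have "l * (x * exp (l*x)) \<ge> l * x" by (simp add: algebra_simps)
  then show ?thesis using lp by simp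
qed simp
lemma sums_b:
  fixes x K :: real assumes x: "0 \<le> x" "x < 1"
  shows "(\<lambda>k. if k = 0 then 0 else K * (real k + 1) * x^(k-1)) sums (K * (1/(1-x)^2 + 1/(1-x)))"
proof -
  have "(\<lambda>n. of_nat (Suc n) * x ^ n + x^n) sums (1/(1-x)^2 + 1/(1-x))"
    using x by (intro sums_add geometric_deriv_sums geometric_sums) auto
  then have "(\<lambda>n. K * (of_nat (Suc n) * x ^ n + x^n)) sums (K * (1/(1-x)^2 + 1/(1-x)))"
    by (rule sums_mult)
  then have "(\<lambda>n. (\<lambda>k. if k = 0 then 0 else K * (real k + 1) * x^(k-1)) (Suc n)) sums (K * (1/(1-x)^2 + 1/(1-x)))"
    by (simp add: algebra_simps)
  then show ?thesis by (subst (asm) sums_Suc_iff) simp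
qed

lemma sums_d:
  fixes x K :: real assumes x: "0 \<le> x" "x < 1"
  shows "(\<lambda>k. if k = 0 then 1 else if k = 1 then 0 else K * x^(k-2)) sums (1 + K / (1-x))"
proof -
  have "(\<lambda>n. K * x^n) sums (K * (1/(1-x)))"
    using x by (intro sums_mult geometric_sums) auto
  then have "(\<lambda>n. (\<lambda>k. if k = 0 then 1 else if k = 1 then 0 else K * x^(k-2)) (Suc (Suc n))) sums (K / (1-x))"
    by simp
  then have "(\<lambda>n. (\<lambda>k. if k = 0 then 1 else if k = 1 then 0 else K * x^(k-2)) (Suc n)) sums (K / (1-x))"
    by (subst (asm) sums_Suc_iff) simp
  then show ?thesis by (subst (asm) sums_Suc_iff) (simp add: add.commute)
qed
lemma alg1: "(q::real) \<noteq> 0 \<Longrightarrow> (a/2) * (1/q^2 + 1/q) = (1 - 0.5*(1-q))/q^2 * a"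
  by (simp add: field_simps power2_eq_square)

lemma one_var:
  fixes M :: "'a measure" and X :: "'a \<Rightarrow> real"
  assumes P: "prob_space M"
    and integ: "\<And>k. integrable M (\<lambda>x. X x ^ k)"
    and mean0: "(\<integral>x. X x \<partial>M) = 0"
    and eps: "\<epsilon> > 0"
    and bern: "\<And>k. k \<ge> 3 \<Longrightarrow>
        \<bar>\<integral>x. X x ^ k \<partial>M\<bar> \<le> 1/2 * fact k * \<epsilon> ^ (k - 2) * (\<integral>x. X x ^ 2 \<partial>M)"
    and l: "0 \<le> l" "l * \<epsilon> < 1"
  defines "s2 \<equiv> (\<integral>x. X x ^ 2 \<partial>M)"
    and "F \<equiv> (\<integral>x. exp (l * X x) \<partial>M)"
    and "G \<equiv> (\<integral>x. X x * exp (l * X x) \<partial>M)"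
  shows "(1 - 1.5 * l * \<epsilon>) * (1 - l * \<epsilon>) / (1 - l * \<epsilon> + 6 * l^2 * \<epsilon>^2) * l * s2 \<le> G / F
       \<and> G / F \<le> (1 - 0.5 * l * \<epsilon>) / (1 - l * \<epsilon>)^2 * l * s2"
proof -
  interpret prob_space M by (rule P)
  have Xm[measurable]: "X \<in> borel_measurable M"
    using integ[of 1] by (simp add: borel_measurable_integrable)
  define c where "c k = (\<integral>x. X x ^ k \<partial>M)" for k
  define x where "x = l * \<epsilon>"
  have x: "0 \<le> x" "x < 1" using l eps by (auto simp: x_def)
  have s2: "0 \<le> s2" unfolding s2_def by (simp add: integral_nonneg_AE)
  have c0: "c 0 = 1" by (simp add: c_def prob_space)
  have c1: "c 1 = 0" using mean0 by (simp add: c_def)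
  have c2: "c 2 = s2" by (simp add: c_def s2_def)
  have c1s: "c (Suc 0) = 0" using c1 by simp
  have c2s: "c (Suc (Suc 0)) = s2" using c2 by (simp add: numeral_2_eq_2)
  have bern': "\<bar>c k\<bar> \<le> 1/2 * fact k * \<epsilon> ^ (k - 2) * s2" if "k \<ge> 3" for k
    using bern[OF that] by (simp add: c_def s2_def)
  define l' where "l' = (l + 1/\<epsilon>) / 2"
  define \<delta> where "\<delta> = l' - l"
  have \<delta>: "\<delta> > 0" using l eps by (simp add: \<delta>_def l'_def field_simps)
  have l': "0 \<le> l'" "l' * \<epsilon> < 1" using l eps by (auto simp: l'_def field_simps)
  have ie: "integrable M (\<lambda>x. exp (l' * \<bar>X x\<bar>))"
    by (rule exp_abs_integrable[OF P integ eps bern l'])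
  define w where "w y = (1 + 1/\<delta>) * exp (l' * \<bar>X y\<bar>)" for y
  have wi: "integrable M w" unfolding w_def using ie by simp
  have le1: "exp (l * \<bar>X y\<bar>) \<le> exp (l' * \<bar>X y\<bar>)" for y
    using \<delta> by (simp add: \<delta>_def mult_right_mono)
  have b0: "\<bar>X y\<bar>^0 * exp (l * \<bar>X y\<bar>) \<le> w y" for y
  proof -
    have "exp (l' * \<bar>X y\<bar>) \<le> (1 + 1/\<delta>) * exp (l' * \<bar>X y\<bar>)"
      using \<delta> by (simp add: algebra_simps)
    with le1[of y] have "exp (l * \<bar>X y\<bar>) \<le> (1 + 1/\<delta>) * exp (l' * \<bar>X y\<bar>)"
      by (rule order_trans)
    then show ?thesis by (simp add: w_def)
  qed
  have b1: "\<bar>X y\<bar>^1 * exp (l * \<bar>X y\<bar>) \<le> w y" for y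
  proof -
    have "\<delta> * \<bar>X y\<bar> \<le> exp (\<delta> * \<bar>X y\<bar>)"
      using exp_ge_add_one_self[of "\<delta> * \<bar>X y\<bar>"] by linarith
    then have "\<bar>X y\<bar> \<le> exp (\<delta> * \<bar>X y\<bar>) / \<delta>" using \<delta> by (simp add: field_simps)
    then have "\<bar>X y\<bar> * exp (l * \<bar>X y\<bar>) \<le> exp (\<delta> * \<bar>X y\<bar>) / \<delta> * exp (l * \<bar>X y\<bar>)"
      by (rule mult_right_mono) simp
    also have "\<dots> = exp (l' * \<bar>X y\<bar>) / \<delta>"
    proof -
      have "exp (\<delta> * \<bar>X y\<bar>) * exp (l * \<bar>X y\<bar>) = exp (\<delta> * \<bar>X y\<bar> + l * \<bar>X y\<bar>)"
        by (simp add: exp_add)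
      also have "\<delta> * \<bar>X y\<bar> + l * \<bar>X y\<bar> = l' * \<bar>X y\<bar>" by (simp add: \<delta>_def algebra_simps)
      finally show ?thesis by simp
    qed
    also have "\<dots> \<le> w y" using \<delta> by (simp add: w_def algebra_simps)
    finally show ?thesis by simp
  qed
  have sF: "(\<lambda>k. c k * l^k / fact k) sums F"
    using moment_series[OF P integ wi b0 l(1)] by (simp add: c_def F_def)
  have sG: "(\<lambda>k. c (k+1) * l^k / fact k) sums G"
    using moment_series[OF P integ wi b1 l(1)] by (simp add: c_def G_def)
  have wpos: "0 \<le> w y" for y using \<delta> by (simp add: w_def)
  have el: "exp (l * X y) \<le> exp (l * \<bar>X y\<bar>)" for y
    using l by (simp add: mult_left_mono)
  have iF: "integrable M (\<lambda>y. exp (l * X y))"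
  proof (rule Bochner_Integration.integrable_bound[OF wi])
    show "(\<lambda>y. exp (l * X y)) \<in> borel_measurable M" by measurable
    have "norm (exp (l * X y)) \<le> norm (w y)" for y
    proof -
      from b0[of y] have "exp (l * \<bar>X y\<bar>) \<le> w y" by simp
      then have "exp (l * X y) \<le> w y" by (rule order_trans[OF el])
      then show ?thesis using wpos[of y] by simp
    qed
    then show "AE y in M. norm (exp (l * X y)) \<le> norm (w y)" by simp
  qed
  have iG: "integrable M (\<lambda>y. X y * exp (l * X y))"
  proof (rule Bochner_Integration.integrable_bound[OF wi])
    show "(\<lambda>y. X y * exp (l * X y)) \<in> borel_measurable M" by measurable
    have "norm (X y * exp (l * X y)) \<le> norm (w y)" for y
    proof -
      have "norm (X y * exp (l * X y)) = \<bar>X y\<bar> * exp (l * X y)" by (simp add: abs_mult)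
      also have "\<dots> \<le> \<bar>X y\<bar> * exp (l * \<bar>X y\<bar>)" by (intro mult_left_mono el) auto
      also have "\<dots> \<le> w y" using b1[of y] by simp
      finally show ?thesis using wpos[of y] by simp
    qed
    then show "AE y in M. norm (X y * exp (l * X y)) \<le> norm (w y)" by simp
  qed
  have F1: "1 \<le> F"
  proof -
    have "(\<integral>y. 1 + l * X y \<partial>M) \<le> F" unfolding F_def
      using iF integ[of 1] by (intro integral_mono) (auto simp: exp_ge_add_one_self)
    moreover have "(\<integral>y. 1 + l * X y \<partial>M) = 1"
      using integ[of 1] mean0 by (simp add: integral_add prob_space)
    ultimately show ?thesis by simp
  qed
  have G0: "0 \<le> G"
  proof -
    have "(\<integral>y. X y \<partial>M) \<le> G" unfolding G_def
      using iG integ[of 1] by (intro integral_mono) (auto simp: pw_nonneg l)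
    then show ?thesis using mean0 by simp
  qed
  have Glow: "l * s2 * (1 - 1.5 * x) \<le> G"
  proof -
    have i1: "integrable M X" using integ[of 1] by simp
    have i2: "integrable M (\<lambda>y. l * X y ^ 2)" using integ[of 2] by simp
    have i3: "integrable M (\<lambda>y. l^2 * X y ^ 3 / 2)" using integ[of 3] by simp
    have ip: "integrable M (\<lambda>y. X y + l * X y ^ 2 + l^2 * X y ^ 3 / 2)"
      using i1 i2 i3 by (intro Bochner_Integration.integrable_add)
    have eqI: "(\<integral>y. X y + l * X y ^ 2 + l^2 * X y ^ 3 / 2 \<partial>M) = c 1 + l * c 2 + l^2 * c 3 / 2"
      using i1 i2 i3 unfolding c_def
      by (simp add: Bochner_Integration.integral_add Bochner_Integration.integrable_add)
    have "(\<integral>y. X y + l * X y ^ 2 + l^2 * X y ^ 3 / 2 \<partial>M) \<le> G" unfolding G_def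
      using iG ip by (intro integral_mono) (auto simp: pw_lower l)
    moreover note eqI
    moreover have "\<bar>c 3\<bar> \<le> 3 * \<epsilon> * s2" using bern'[of 3] by (simp add: fact_numeral)
    moreover have "l * s2 * (1 - 1.5 * x) = l * s2 - l^2 * (3 * \<epsilon> * s2) / 2"
      by (simp add: x_def power2_eq_square algebra_simps)
    moreover have "- (l^2 * (3 * \<epsilon> * s2) / 2) \<le> l^2 * c 3 / 2"
    proof -
      have "-(3 * \<epsilon> * s2) \<le> c 3" using calculation(3) by linarith
      then have "l^2 * (-(3 * \<epsilon> * s2)) \<le> l^2 * c 3" by (intro mult_left_mono) auto
      then show ?thesis by (simp add: algebra_simps)
    qed
    ultimately show ?thesis unfolding c1 c2 by linarith
  qed
  have s2eps: "s2 \<le> 12 * \<epsilon>^2"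
  proof -
    have "0 \<le> (\<integral>y. (X y ^ 2 - s2)^2 \<partial>M)" by (simp add: integral_nonneg_AE)
    also have "(\<integral>y. (X y ^ 2 - s2)^2 \<partial>M) = (\<integral>y. X y ^ 4 - 2 * s2 * X y ^ 2 + s2^2 \<partial>M)"
      by (rule Bochner_Integration.integral_cong) (simp_all add: power2_eq_square power4_eq_xxxx algebra_simps)
    also have "\<dots> = c 4 - 2 * s2 * c 2 + s2^2"
      using integ unfolding c_def by (simp add: integral_add integral_diff prob_space)
    finally have "s2^2 \<le> c 4" using c2 by (simp add: power2_eq_square)
    also have "c 4 \<le> 12 * \<epsilon>^2 * s2" using bern'[of 4] by (simp add: fact_numeral)
    finally have "s2 * s2 \<le> (12 * \<epsilon>^2) * s2" by (simp add: power2_eq_square)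
    then show ?thesis using s2 by (cases "s2 = 0") (auto simp: mult_le_cancel_right)
  qed
  have Gup: "G \<le> (l * s2 / 2) * (1/(1-x)^2 + 1/(1-x))"
  proof (rule sums_le[OF _ sG sums_b[OF x]])
    fix k :: nat
    show "c (k+1) * l^k / fact k \<le> (if k = 0 then 0 else l * s2 / 2 * (real k + 1) * x^(k-1))"
    proof (cases "k \<le> 1")
      case True
      then consider "k = 0" | "k = 1" by linarith
      then show ?thesis by cases (auto simp: c1s c2s)
    next
      case False
      then obtain m where m: "k = Suc m" "m \<ge> 1" by (cases k) auto
      have "c (k+1) * l^k / fact k \<le> \<bar>c (k+1)\<bar> * l^k / fact k"
        using l by (intro divide_right_mono mult_right_mono) auto
      also have "\<dots> \<le> (1/2 * fact (k+1) * \<epsilon> ^ (k + 1 - 2) * s2) * l^k / fact k"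
        using bern'[of "k+1"] False l by (intro divide_right_mono mult_right_mono) auto
      also have "\<dots> = l * s2 / 2 * (real k + 1) * x^(k-1)"
      proof -
        have f: "fact (k+1) = (real k + 1) * (fact k::real)" by (simp add: algebra_simps)
        have fk: "(fact k :: real) \<noteq> 0" by simp
        have p: "\<epsilon>^(k+1-2) * l^k = l * x^(k-1)" using m by (simp add: x_def power_mult_distrib)
        have "(1/2 * fact (k+1) * \<epsilon> ^ (k + 1 - 2) * s2) * l^k / fact k
              = 1/2 * (real k + 1) * s2 * (\<epsilon>^(k+1-2) * l^k)"
          unfolding f using fk by (simp add: field_simps)
        then show ?thesis unfolding p by (simp add: algebra_simps)
      qed
      finally show ?thesis using False by simp
    qed
  qed
  have Fup: "F \<le> 1 + (l^2 * s2 / 2) / (1-x)"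
  proof (rule sums_le[OF _ sF sums_d[OF x]])
    fix k :: nat
    show "c k * l^k / fact k \<le> (if k = 0 then 1 else if k = 1 then 0 else l^2 * s2 / 2 * x^(k-2))"
    proof (cases "k \<le> 2")
      case True
      then consider "k = 0" | "k = 1" | "k = 2" by linarith
      then show ?thesis by cases (auto simp: c0 c1s c2s numeral_2_eq_2 power2_eq_square)
    next
      case False
      then obtain m where m: "k = Suc (Suc m)" "m \<ge> 1" by (cases k; cases "k - 1") auto
      have "c k * l^k / fact k \<le> \<bar>c k\<bar> * l^k / fact k"
        using l by (intro divide_right_mono mult_right_mono) auto
      also have "\<dots> \<le> (1/2 * fact k * \<epsilon> ^ (k - 2) * s2) * l^k / fact k"
        using bern'[of k] False l by (intro divide_right_mono mult_right_mono) auto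
      also have "\<dots> = l^2 * s2 / 2 * x^(k-2)"
      proof -
        have fk: "(fact k :: real) \<noteq> 0" by simp
        have p: "\<epsilon>^(k-2) * l^k = l^2 * x^(k-2)" using m by (simp add: x_def power_mult_distrib power2_eq_square)
        have "(1/2 * fact k * \<epsilon> ^ (k - 2) * s2) * l^k / fact k = 1/2 * s2 * (\<epsilon>^(k-2) * l^k)"
          using fk by (simp add: field_simps)
        then show ?thesis unfolding p by (simp add: algebra_simps)
      qed
      finally show ?thesis using False by simp
    qed
  qed
  have Fup2: "F \<le> (1 - x + 6 * x^2) / (1 - x)"
  proof -
    have "l^2 * s2 \<le> l^2 * (12 * \<epsilon>^2)" using s2eps by (intro mult_left_mono) auto
    then have "(l^2 * s2 / 2) / (1-x) \<le> (6 * x^2) / (1-x)"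
      using x by (intro divide_right_mono) (auto simp: x_def power_mult_distrib)
    then have "F \<le> 1 + (6 * x^2) / (1-x)" using Fup by linarith
    also have "\<dots> = (1 - x + 6 * x^2) / (1 - x)" using x by (simp add: field_simps)
    finally show ?thesis .
  qed
  have Fpos: "0 < F" using F1 by simp
  have upper: "G / F \<le> (1 - 0.5 * x) / (1 - x)^2 * l * s2"
  proof -
    have "G / F \<le> G" using F1 G0 by (simp add: divide_le_eq mult_le_cancel_left1 mult_le_cancel_left2)
    also have "\<dots> \<le> (l * s2 / 2) * (1/(1-x)^2 + 1/(1-x))" by (rule Gup)
    also have "\<dots> = (1 - 0.5 * x) / (1 - x)^2 * l * s2"
      using alg1[of "1-x" "l * s2"] x by (simp add: mult.assoc)
    finally show ?thesis .
  qed
  have D: "0 < 1 - x + 6 * x^2" using x by (smt (verit) zero_le_power2)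
  have lower: "(1 - 1.5 * x) * (1 - x) / (1 - x + 6 * x^2) * l * s2 \<le> G / F"
  proof (cases "1 - 1.5 * x \<le> 0")
    case True
    have "(1 - 1.5 * x) * (1 - x) / (1 - x + 6 * x^2) \<le> 0"
      using True x D by (intro divide_nonpos_pos mult_nonpos_nonneg) auto
    then have "(1 - 1.5 * x) * (1 - x) / (1 - x + 6 * x^2) * (l * s2) \<le> 0"
      using l s2 by (intro mult_nonpos_nonneg) auto
    then have "(1 - 1.5 * x) * (1 - x) / (1 - x + 6 * x^2) * l * s2 \<le> 0"
      by (simp only: mult.assoc)
    also have "0 \<le> G / F" using G0 Fpos by simp
    finally show ?thesis .
  next
    case False
    have "(1 - 1.5 * x) * (1 - x) / (1 - x + 6 * x^2) * l * s2 = (l * s2 * (1 - 1.5 * x)) / ((1 - x + 6 * x^2) / (1 - x))"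
      using x D by (simp add: field_simps)
    also have "\<dots> \<le> (l * s2 * (1 - 1.5 * x)) / F"
    proof (rule divide_left_mono)
      show "F \<le> (1 - x + 6 * x^2) / (1 - x)" by (rule Fup2)
      show "0 \<le> l * s2 * (1 - 1.5 * x)" using False l s2 by simp
      have Q: "0 < (1 - x + 6*x^2)/(1-x)" using D x by simp
      show "0 < (1 - x + 6 * x^2) / (1 - x) * F" using Q Fpos by (rule mult_pos_pos)
    qed
    also have "\<dots> \<le> G / F" using Glow Fpos by (intro divide_right_mono) auto
    finally show ?thesis .
  qed
  show ?thesis using upper lower by (simp add: x_def mult.assoc power_mult_distrib)
qed
lemma alg2:
  fixes x :: real assumes x: "0 \<le> x" "x < 1"
  shows "1 - 2.4 * x \<le> (1 - 1.5 * x) * (1 - x) / (1 - x + 6 * x^2)"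
proof -
  have D: "0 < 1 - x + 6 * x^2" using x by (smt (verit) zero_le_power2)
  have e: "(1 - 1.5 * x) * (1 - x) - (1 - 2.4 * x) * (1 - x + 6 * x^2) = x * (14.4 * (x - 23/96)^2 + 0.0734375)"
    by (simp add: power2_eq_square field_simps)
  have "0 \<le> x * (14.4 * (x - 23/96)^2 + 0.0734375)" using x by simp
  then have "(1 - 2.4 * x) * (1 - x + 6 * x^2) \<le> (1 - 1.5 * x) * (1 - x)" using e by linarith
  then show ?thesis using D by (simp add: le_divide_eq)
qed

theorem lemma1:
  fixes M :: "'a measure" and \<xi> :: "nat \<Rightarrow> 'a \<Rightarrow> real" and n :: nat
    and \<epsilon> \<sigma>2 l :: real
  assumes "prob_space M"
    and indep: "prob_space.indep_vars M (\<lambda>_. borel) \<xi> {1..n}"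
    and integ: "\<And>i k. i \<in> {1..n} \<Longrightarrow> integrable M (\<lambda>x. \<xi> i x ^ k)"
    and mean0: "\<And>i. i \<in> {1..n} \<Longrightarrow> (\<integral>x. \<xi> i x \<partial>M) = 0"
    and eps: "\<epsilon> > 0"
    and bernstein: "\<And>i k. i \<in> {1..n} \<Longrightarrow> k \<ge> 3 \<Longrightarrow>
        \<bar>\<integral>x. \<xi> i x ^ k \<partial>M\<bar> \<le> 1/2 * fact k * \<epsilon> ^ (k - 2) * (\<integral>x. \<xi> i x ^ 2 \<partial>M)"
    and sigma: "\<sigma>2 = (\<Sum>i=1..n. \<integral>x. \<xi> i x ^ 2 \<partial>M)"
    and lam: "0 \<le> l" "l < 1 / \<epsilon>"
  shows "(1 - 2.4 * l * \<epsilon>) * l * \<sigma>2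
           \<le> (1 - 1.5 * l * \<epsilon>) * (1 - l * \<epsilon>) / (1 - l * \<epsilon> + 6 * l^2 * \<epsilon>^2) * l * \<sigma>2
       \<and> (1 - 1.5 * l * \<epsilon>) * (1 - l * \<epsilon>) / (1 - l * \<epsilon> + 6 * l^2 * \<epsilon>^2) * l * \<sigma>2
           \<le> T_n M \<xi> n l
       \<and> T_n M \<xi> n l \<le> (1 - 0.5 * l * \<epsilon>) / (1 - l * \<epsilon>)^2 * l * \<sigma>2"
proof -
  interpret prob_space M by (rule assms(1))
  define R where "R = (1 - 1.5 * l * \<epsilon>) * (1 - l * \<epsilon>) / (1 - l * \<epsilon> + 6 * l^2 * \<epsilon>^2)"
  define U where "U = (1 - 0.5 * l * \<epsilon>) / (1 - l * \<epsilon>)^2"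
  define s where "s i = (\<integral>x. \<xi> i x ^ 2 \<partial>M)" for i
  define t where "t i = (\<integral>x. \<xi> i x * exp (l * \<xi> i x) \<partial>M) / (\<integral>x. exp (l * \<xi> i x) \<partial>M)" for i
  have le: "l * \<epsilon> < 1" using lam eps by (simp add: field_simps)
  have bi: "R * l * s i \<le> t i \<and> t i \<le> U * l * s i" if i: "i \<in> {1..n}" for i
    using one_var[OF assms(1) integ[OF i] mean0[OF i] eps bernstein[OF i] lam(1) le]
    unfolding R_def U_def s_def t_def by simp
  have Tn: "T_n M \<xi> n l = (\<Sum>i=1..n. t i)" by (simp add: T_n_def t_def)
  have sig: "\<sigma>2 = (\<Sum>i=1..n. s i)" by (simp add: sigma s_def)
  have sn: "0 \<le> \<sigma>2" unfolding sig s_def by (intro sum_nonneg) (simp add: integral_nonneg_AE)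
  have low: "R * l * \<sigma>2 \<le> T_n M \<xi> n l"
  proof -
    have "R * l * \<sigma>2 = (\<Sum>i=1..n. R * l * s i)" by (simp add: sig sum_distrib_left)
    also have "\<dots> \<le> (\<Sum>i=1..n. t i)" using bi by (intro sum_mono) auto
    finally show ?thesis by (simp add: Tn)
  qed
  have up: "T_n M \<xi> n l \<le> U * l * \<sigma>2"
  proof -
    have "(\<Sum>i=1..n. t i) \<le> (\<Sum>i=1..n. U * l * s i)" using bi by (intro sum_mono) auto
    also have "\<dots> = U * l * \<sigma>2" by (simp add: sig sum_distrib_left)
    finally show ?thesis by (simp add: Tn)
  qed
  have "1 - 2.4 * (l * \<epsilon>) \<le> (1 - 1.5 * (l * \<epsilon>)) * (1 - l * \<epsilon>) / (1 - l * \<epsilon> + 6 * (l * \<epsilon>)^2)"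
    using alg2[of "l * \<epsilon>"] le lam eps by simp
  then have "1 - 2.4 * l * \<epsilon> \<le> R" unfolding R_def by (simp add: mult.assoc power_mult_distrib)
  then have "(1 - 2.4 * l * \<epsilon>) * (l * \<sigma>2) \<le> R * (l * \<sigma>2)"
    using lam sn by (intro mult_right_mono) auto
  then have first: "(1 - 2.4 * l * \<epsilon>) * l * \<sigma>2 \<le> R * l * \<sigma>2" by (simp only: mult.assoc)
  show ?thesis using first low up unfolding R_def U_def by blast
qed

end
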